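(* Fix $K\ge 1$. There is a constant $C_K$ depending only on $K$ such that, for all integers $n\ge K$ and $N>1$, all $\epsilon\in(0,1)$ and all $\delta\in(0,1/2]$, the total number of pulls made by MedianElimination (described in the context) with parameters $K,\epsilon,\delta$ on any MAB-BP instance with $n$ arms and reward lists of length $N$ is at most $$C_K\,\frac{n\sqrt{N}}{\epsilon}\sqrt{\log\frac1\delta}\,,$$ i.e. the time complexity is $O\!\left(\frac{n\sqrt N}{\epsilon}\sqrt{\log(1/\delta)}\right)$.
   Context: Multi-Armed Bandit with Bounded Pulls (MAB-BP): there are $n$ arms $a_1,\dots,a_n$; arm $a_i$ has a reward list $R_i=(R_i^{(1)},\dots,R_i^{(N)})$ with $R_i^{(j)}\in[0,1]$, and true mean $p_i=\frac1N\sum_{j=1}^N R_i^{(j)}$. Each pull of arm $a_i$ returns a value drawn uniformly at random without replacement from the entries of $R_i$ not yet returned. Define for $u>0$ $$m(u)=\min\left\{\frac{u+1}{1+\frac{u}{N}},\ \frac{u+\frac{u}{N}}{1+\frac{u}{N}}\right\}.$$ Algorithm MedianElimination (input $K\ge1$, $\epsilon>0$, $\delta>0$, arm set $A$): set $S_1=A$, $\epsilon_1=\epsilon/4$, $\delta_1=\delta/2$, $l=1$, $t_0=0$. While $|S_l|>K$: set $$t_l=\left\lceil m\!\left(\frac{2}{\epsilon_l^2}\log\frac{2(|S_l|-K)}{\delta_l\left(\left\lfloor\frac{|S_l|-K}{2}\right\rfloor+1\right)}\right)\right\rceil;$$ pull every arm $a\in S_l$ an additional $t_l-t_{l-1}$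 times, and let $\hat p^l_a$ be the empirical mean of all $t_l$ rewards obtained from $a$ since the start; remove from $S_l$ the $\left\lceil\frac{|S_l|-K}{2}\right\rceil$ arms with the smallest values of $\hat p^l_a$ to obtain $S_{l+1}$; set $\epsilon_{l+1}=\frac34\epsilon_l$, $\delta_{l+1}=\frac12\delta_l$, $l\leftarrow l+1$. When the loop ends, return $S_l$. *)

theory Defs
  imports Complex_Main
begin

definition mfun :: "nat \<Rightarrow> real \<Rightarrow> real" where
  "mfun N u = min ((u + 1) / (1 + u / real N)) ((u + u / real N) / (1 + u / real N))"

text \<open>t_l for round index i (i = l - 1, 0-based), current set size s:
  eps_l = (eps/4) (3/4)^i, delta_l = (delta/2) (1/2)^i.
  floor((s-K)/2) = (s-K) div 2 for naturals.\<close>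
definition me_t :: "nat \<Rightarrow> real \<Rightarrow> real \<Rightarrow> nat \<Rightarrow> nat \<Rightarrow> nat \<Rightarrow> nat" where
  "me_t K eps del N s i =
     (let epsl = (eps / 4) * (3/4) ^ i;
          dell = (del / 2) * (1/2) ^ i
      in nat \<lceil>mfun N ((2 / epsl ^ 2) *
               ln (2 * real (s - K) / (dell * (real ((s - K) div 2) + 1))))\<rceil>)"

text \<open>Total number of pulls made by MedianElimination from round i (0-based) on,
  when the current arm set has size s and each surviving arm has already been
  pulled tprev times.\<close>
function me_pulls :: "nat \<Rightarrow> real \<Rightarrow> real \<Rightarrow> nat \<Rightarrow> nat \<Rightarrow> nat \<Rightarrow> nat \<Rightarrow> nat" where
  "me_pulls K eps del N s i tprev =
     (if s \<le> K then 0
      else (let t = me_t K eps del N s i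
            in s * (t - tprev) + me_pulls K eps del N (s - (s - K + 1) div 2) (Suc i) t))"
  by pat_completeness auto
termination
  by (relation "measure (\<lambda>(K, eps, del, N, s, i, tprev). s)") auto

definition median_elimination_pulls :: "nat \<Rightarrow> real \<Rightarrow> real \<Rightarrow> nat \<Rightarrow> nat \<Rightarrow> nat" where
  "median_elimination_pulls K eps del N n = me_pulls K eps del N n 0 0"

end

theory Submission
  imports Defs
begin

lemma mfun_bound:
  assumes N: "real N \<ge> 1" and u: "u \<ge> 0"
  shows "mfun N u \<le> sqrt (real N * u) + 1"
proof -
  let ?X = "(u + 1) / (1 + u / real N)"
  have d: "1 + u / real N \<ge> 1" using N u by simp
  have m1: "mfun N u \<le> ?X" unfolding mfun_def by simp
  have x1: "?X \<le> u + 1" using d u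
  proof -
    have "(u+1) * 1 \<le> (u+1) * (1 + u / real N)" using d u by (intro mult_left_mono) auto
    then show ?thesis using d by (simp add: divide_le_eq)
  qed
  have eq: "?X = real N * (u + 1) / (real N + u)" using N
    by (simp add: field_simps)
  have x2: "?X \<le> real N + 1" unfolding eq using N u
    by (simp add: divide_le_eq algebra_simps)
  have s1: "min u (real N) \<le> sqrt (real N * u)"
  proof -
    have "min u (real N) = sqrt (min u (real N) * min u (real N))" using N u by simp
    also have "\<dots> \<le> sqrt (real N * u)"
      by (rule real_sqrt_le_mono) (smt (verit) N u mult_mono)
    finally show ?thesis .
  qed
  show ?thesis using m1 x1 x2 s1 by linarith
qed

lemma sqpow: "((x::real)^i)^2 = (x^2)^i" by (metis power_mult mult.commute)

lemma pow_lemma: "(4 + real i) \<le> 4 * (81/64) ^ i"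
proof (induction i)
  case 0 then show ?case by simp
next
  case (Suc i)
  have "(1::real) \<le> (81/64)^i" by simp
  then show ?case using Suc by simp
qed

lemma t_bound:
  assumes sK: "K < s" and e: "0 < eps" and d0: "0 < del" and d1: "del \<le> 1/2" and N: "real N \<ge> 1"
  shows "real (me_t K eps del N s i) \<le> sqrt (128 * real N * ln (1/del)) / eps * (3/2)^i + 2"
proof -
  define L where "L = ln (1/del)"
  define epsl where "epsl = (eps / 4) * (3/4::real) ^ i"
  define dell where "dell = (del / 2) * (1/2::real) ^ i"
  define a where "a = real (s - K)"
  define q where "q = real ((s - K) div 2) + 1"
  define arg where "arg = 2 * a / (dell * q)"
  define u where "u = (2 / epsl ^ 2) * ln arg"
  have ln2L: "ln 2 \<le> L" unfolding L_def using d0 d1 by (simp add: le_divide_eq)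
  have ln2: "0 < ln (2::real)" by simp
  have L0: "0 \<le> L" using ln2L ln2 by linarith
  have dellpos: "dell > 0" unfolding dell_def using d0 by simp
  have n1: "(s - K) div 2 + 1 \<le> s - K" "s - K < 2 * ((s - K) div 2 + 1)" using sK by presburger+
  have n2: "real ((s - K) div 2 + 1) \<le> real (s - K)" "real (s - K) < real (2 * ((s - K) div 2 + 1))"
    using n1 of_nat_le_iff of_nat_less_iff by blast+
  have qa: "q \<le> a" "a < 2 * q" "1 \<le> q" unfolding a_def q_def using n2 by simp_all
  have argpos: "arg \<ge> 1"
  proof -
    have "(1/2::real)^i \<le> 1" by (rule power_le_one) auto
    moreover have "del / 2 \<le> 1" using d1 by simp
    ultimately have "dell \<le> 1" unfolding dell_def by (intro mult_le_one) auto
    then have "dell * q \<le> 1 * q" using qa by (intro mult_right_mono) auto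
    then have "dell * q \<le> 2 * a" using qa by linarith
    moreover have "dell * q > 0" using dellpos qa by simp
    ultimately show ?thesis unfolding arg_def by (simp add: le_divide_eq)
  qed
  have argup: "arg \<le> 8 * 2^i / del"
  proof -
    have "arg \<le> 4 / dell" unfolding arg_def using qa dellpos
      by (simp add: divide_le_eq field_simps)
    also have "4 / dell = 8 * 2^i / del" unfolding dell_def using d0 by (simp add: field_simps power_divide)
    finally show ?thesis .
  qed
  have lnarg: "ln arg \<le> (4 + real i) * L"
  proof -
    have c1: "ln arg \<le> ln (8 * 2^i / del)" using argpos argup by simp
    also have "\<dots> = ln 8 + real i * ln 2 + L" unfolding L_def using d0
      by (simp add: ln_mult ln_div ln_realpow)
    finally have c1: "ln arg \<le> ln 8 + real i * ln 2 + L" .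
    have c2: "ln (8::real) = 3 * ln 2"
    proof -
      have "ln ((2::real)^3) = 3 * ln 2" by (simp only: ln_realpow)
      then show ?thesis by simp
    qed
    have c3: "real i * ln 2 \<le> real i * L" using ln2L by (rule mult_left_mono) simp
    have c4: "(4 + real i) * L = 4*L + real i * L" by (simp add: distrib_right)
    show ?thesis using c1 c2 c3 c4 ln2L by linarith
  qed
  have lnnn: "ln arg \<ge> 0" using argpos by simp
  have e2: "epsl^2 = eps^2/16 * (9/16)^i"
  proof -
    have "epsl^2 = (eps/4)^2 * ((3/4::real)^i)^2" unfolding epsl_def by (simp only: power_mult_distrib)
    also have "((3/4::real)^i)^2 = ((3/4)^2)^i" by (rule sqpow)
    finally show ?thesis by (simp add: power_divide)
  qed
  have pp: "(16/9::real)^i * (9/16)^i = 1" by (simp flip: power_mult_distrib)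
  have coef: "2 / epsl ^ 2 = 32 / eps^2 * (16/9)^i" unfolding e2 using e pp
    by (simp add: field_simps)
  have u0: "u \<ge> 0" unfolding u_def using lnnn by simp
  have uup: "u \<le> 128 * L * (9/4)^i / eps^2"
  proof -
    have "u \<le> 32 / eps^2 * (16/9)^i * ((4 + real i) * L)" unfolding u_def coef
      using lnarg by (intro mult_left_mono) auto
    also have "\<dots> = 32 / eps^2 * L * ((16/9)^i * (4 + real i))" by simp
    also have "\<dots> \<le> 32 / eps^2 * L * ((16/9)^i * (4 * (81/64)^i))"
    proof -
      have "0 \<le> L" using ln2L ln2 by linarith
      then show ?thesis using pow_lemma[of i] by (intro mult_left_mono) auto
    qed
    also have "\<dots> = 128 * L * ((16/9::real)^i * (81/64)^i) / eps^2" by simp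
    also have "(16/9::real)^i * (81/64)^i = (9/4)^i" by (simp flip: power_mult_distrib)
    finally show ?thesis by simp
  qed
  have sq: "sqrt (real N * u) \<le> sqrt (128 * real N * L) / eps * (3/2)^i"
  proof -
    have "sqrt (real N * u) \<le> sqrt (real N * (128 * L * (9/4)^i / eps^2))"
      using uup N by (intro real_sqrt_le_mono mult_left_mono) auto
    also have "real N * (128 * L * (9/4)^i / eps^2) = (128 * real N * L) * ((3/2)^i)^2 / eps^2"
      by (simp add: sqpow power_divide)
    also have "sqrt \<dots> = sqrt (128 * real N * L) * (3/2)^i / eps" using e
      by (simp add: real_sqrt_divide real_sqrt_mult)
    finally show ?thesis by simp
  qed
  have t: "me_t K eps del N s i = nat \<lceil>mfun N u\<rceil>"
    unfolding me_t_def u_def arg_def epsl_def dell_def a_def q_def Let_def by simp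
  have mb: "mfun N u \<le> sqrt (real N * u) + 1" by (rule mfun_bound[OF N u0])
  have "real (nat \<lceil>mfun N u\<rceil>) \<le> mfun N u + 1 \<or> real (nat \<lceil>mfun N u\<rceil>) = 0" by linarith
  moreover have "sqrt (128 * real N * L) / eps * (3/2)^i \<ge> 0" using e L0 by simp
  ultimately show ?thesis unfolding t L_def[symmetric] using mb sq by linarith
qed

declare me_pulls.simps[simp del]

lemma pulls_bound:
  "0 < eps \<Longrightarrow> 0 < del \<Longrightarrow> del \<le> 1/2 \<Longrightarrow> real N \<ge> 1 \<Longrightarrow>
   real (me_pulls K eps del N s i tprev)
     \<le> real (K+1) * real (s-K) * (4 * (sqrt (128 * real N * ln (1/del)) / eps) * (3/2)^i + 4)"
proof (induction K eps del N s i tprev rule: me_pulls.induct)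
  case (1 K eps del N s i tprev)
  define B where "B = sqrt (128 * real N * ln (1/del)) / eps"
  define x where "x = (3/2::real)^i"
  have x0: "x \<ge> 0" unfolding x_def by simp
  have L0: "ln (1/del) \<ge> 0" using "1.prems" by (simp add: le_divide_eq)
  have B0: "B \<ge> 0" unfolding B_def using "1.prems" L0 by simp
  show ?case
  proof (cases "s \<le> K")
    case True
    then show ?thesis by (subst me_pulls.simps) simp
  next
    case False
    define t where "t = me_t K eps del N s i"
    define s' where "s' = s - (s - K + 1) div 2"
    have eq: "me_pulls K eps del N s i tprev = s * (t - tprev) + me_pulls K eps del N s' (Suc i) t"
      using False unfolding t_def s'_def by (subst me_pulls.simps) (simp add: Let_def del: me_pulls.simps)
    have IH: "real (me_pulls K eps del N s' (Suc i) t)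
       \<le> real (K+1) * real (s'-K) * (4 * B * (3/2)^(Suc i) + 4)"
      using "1.IH"[OF False t_def "1.prems"] unfolding B_def s'_def by simp
    have s'K: "2 * (s' - K) \<le> s - K" unfolding s'_def using False by presburger
    have sle: "s \<le> (K+1) * (s - K)"
    proof -
      have "1 \<le> s - K" using False by simp
      from mult_le_mono2[OF this, of K] have a: "K * 1 \<le> K * (s-K)" .
      have "(K+1) * (s - K) = K * (s-K) + (s - K)" by (simp add: distrib_right)
      then show ?thesis using a False by linarith
    qed
    have tb: "real t \<le> B * x + 2" unfolding t_def B_def x_def
      using t_bound[of K s eps del N i] False "1.prems" by simp
    have p1: "real (s * (t - tprev)) \<le> real s * real t"
    proof -
      have "s * (t - tprev) \<le> s * t" by (intro mult_le_mono2) simp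
      then show ?thesis by (metis of_nat_le_iff of_nat_mult)
    qed
    also have "\<dots> \<le> real ((K+1) * (s - K)) * (B * x + 2)"
      using sle tb by (intro mult_mono) (auto simp del: of_nat_mult)
    also have "real ((K+1) * (s - K)) = real (K+1) * real (s - K)" by (rule of_nat_mult)
    finally have p1: "real (s * (t - tprev)) \<le> real (K+1) * real (s - K) * (B * x + 2)" .
    have "real (K+1) * real (s'-K) * (4 * B * (3/2)^(Suc i) + 4)
        = real (K+1) * (2 * real (s'-K)) * (3 * B * x + 2)" unfolding x_def by (simp add: algebra_simps)
    also have "\<dots> \<le> real (K+1) * real (s-K) * (3 * B * x + 2)"
    proof -
      have "2 * real (s'-K) \<le> real (s-K)" using s'K by linarith
      then show ?thesis using B0 x0 by (intro mult_right_mono mult_left_mono) auto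
    qed
    finally have p2: "real (me_pulls K eps del N s' (Suc i) t) \<le> real (K+1) * real (s-K) * (3 * B * x + 2)"
      using IH by linarith
    have "real (me_pulls K eps del N s i tprev)
       \<le> real (K+1) * real (s - K) * (B * x + 2) + real (K+1) * real (s-K) * (3 * B * x + 2)"
      unfolding eq using p1 p2 by simp
    also have "\<dots> = real (K+1) * real (s-K) * (4 * B * x + 4)" by (simp add: algebra_simps)
    finally show ?thesis unfolding B_def x_def by simp
  qed
qed

theorem corollary3:
  fixes K :: nat
  assumes "K \<ge> 1"
  shows "\<exists>C :: real. \<forall>(n::nat) (N::nat) (eps::real) (del::real).
           n \<ge> K \<longrightarrow> N > 1 \<longrightarrow> 0 < eps \<longrightarrow> eps < 1 \<longrightarrow> 0 < del \<longrightarrow> del \<le> 1/2 \<longrightarrow>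
           real (median_elimination_pulls K eps del N n)
             \<le> C * real n * sqrt (real N) / eps * sqrt (ln (1 / del))"
proof (rule exI[of _ "real (K+1) * (4 * sqrt 128 + 8)"], intro allI impI)
  fix n N :: nat and eps del :: real
  assume nK: "n \<ge> K" and N1: "N > 1" and e0: "0 < eps" and e1: "eps < 1" and d0: "0 < del" and d1: "del \<le> 1/2"
  define L where "L = ln (1/del)"
  define Q where "Q = sqrt (real N) / eps * sqrt L"
  have NR: "real N \<ge> 1" using N1 by simp
  have pb: "real (median_elimination_pulls K eps del N n)
      \<le> real (K+1) * real (n-K) * (4 * (sqrt (128 * real N * L) / eps) * (3/2)^0 + 4)"
    unfolding median_elimination_pulls_def L_def by (rule pulls_bound[OF e0 d0 d1 NR])
  have lnb: "1/4 \<le> ln (2::real)"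
  proof -
    have a: "1/2 - (1/2)^2 \<le> ln (1 + 1/2::real)" by (rule ln_one_plus_pos_lower_bound) auto
    have b: "ln (1 + 1/2::real) \<le> ln 2" by (subst ln_le_cancel_iff) auto
    have c: "1/2 - (1/2)^2 = (1/4::real)" by (simp add: power2_eq_square)
    show ?thesis using a b c by linarith
  qed
  have L2: "ln 2 \<le> L" unfolding L_def using d0 d1 by (simp add: le_divide_eq)
  have sL: "1/2 \<le> sqrt L"
  proof -
    have "sqrt (1/4) \<le> sqrt L" using lnb L2 by (intro real_sqrt_le_mono) linarith
    moreover have "sqrt (1/4::real) = 1/2" by (simp add: real_sqrt_divide)
    ultimately show ?thesis by simp
  qed
  have sN: "1 \<le> sqrt (real N)" using NR by simp
  have ie: "1 \<le> 1 / eps" using e0 e1 by simp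
  have Qh: "1/2 \<le> Q"
  proof -
    have "1 * 1 \<le> sqrt (real N) * (1/eps)" using sN ie by (intro mult_mono) auto
    then have "1 \<le> sqrt (real N) / eps" by simp
    then have "1 * (1/2) \<le> sqrt (real N) / eps * sqrt L" using sL by (intro mult_mono) auto
    then show ?thesis unfolding Q_def by simp
  qed
  have Beq: "sqrt (128 * real N * L) / eps = sqrt 128 * Q" unfolding Q_def
    by (simp add: real_sqrt_mult)
  have "real (K+1) * real (n-K) * (4 * (sqrt 128 * Q) + 4)
      \<le> real (K+1) * real n * (4 * sqrt 128 * Q + 8 * Q)"
    using Qh nK by (intro mult_mono) auto
  also have "\<dots> = real (K+1) * (4 * sqrt 128 + 8) * real n * sqrt (real N) / eps * sqrt (ln (1 / del))"
    unfolding Q_def L_def using e0 by (simp add: field_simps)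
  finally show "real (median_elimination_pulls K eps del N n)
      \<le> real (K+1) * (4 * sqrt 128 + 8) * real n * sqrt (real N) / eps * sqrt (ln (1 / del))"
    using pb Beq by simp
qed

end
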